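(* Let $\gamma\in\mathbb{R}\setminus\{0,1,2,-2\}$ and $\epsilon\in\mathbb{R}$, and put $\kappa=\frac{\gamma+2}{\gamma-2}$. Let $\mathfrak g$ be the complex Lie algebra with basis $X_1,X_2,X_3,X_4,Y,Z$ and brackets \[ [X_2,X_1]=X_2+\epsilon Z,\quad [X_2,X_4]=[X_2,X_3]=[X_1,X_4]=0,\quad [X_1,X_3]=-X_3,\quad [X_3,X_4]=X_3, \] \[ [X_1,Z]=-\epsilon\,\tfrac{\gamma-2}{\gamma+2}\,Y,\quad [X_1,Y]=Y,\quad [X_2,Y]=Z,\quad [X_2,Z]=\tfrac{\gamma-2}{\gamma+2}X_2,\quad [Z,Y]=\tfrac{\gamma-2}{\gamma+2}Y, \] \[ [X_3,Y]=[X_3,Z]=[X_4,Y]=[X_4,Z]=0 . \] In the universal enveloping algebra $U(\mathfrak g)$ define $T=\sqrt{2\kappa}\,(Y+X_2)$, $S=\sqrt{2\kappa}\,(Y-X_2)$, $Z'=2\kappa Z$ and \[ C=T^2-S^2-Z'^2 . \] Then $C=4\kappa\left[2X_2Y-Z\left(\kappa Z+1\right)\right]$, and $C$ commutes (in $U(\mathfrak g)$) with each of $Y,Z,X_1,X_2,X_3,X_4$.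
   Context: The elements $T,S,Z'$ span a subalgebra isomorphic to $sl(2)$ with $[Z',T]=2S$, $[T,S]=2Z'$, $[S,Z']=-2T$, and $C$ is its Casimir element. The exclusion $\gamma\neq\pm2$ is needed only for the coefficients to be defined. In the paper this algebra arises from approximate symmetry generators of the equation $u_{tt}+\epsilon u_t=[(1+u/\gamma)^{\gamma-1}]_{xx}$, realized e.g. by $X_2=\partial_t$, $X_3=\partial_x$, $X_4=x\partial_x+\frac{2\gamma}{\gamma-2}(1+\frac u\gamma)\partial_u$, $Z=\frac{\gamma-2}{\gamma+2}t\partial_t-\frac{2\gamma}{\gamma+2}(1+\frac u\gamma)\partial_u$, $Y=\frac{\gamma-2}{\gamma+2}\frac{t^2}{2}\partial_t-\frac{2\gamma t}{\gamma+2}(1+\frac u\gamma)\partial_u$, $X_1=t\partial_t+x\partial_x+\epsilon Y$. *)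

theory Defs
  imports "HOL-Analysis.Analysis"
begin

definition commutator :: "'a::ring \<Rightarrow> 'a \<Rightarrow> 'a" where
  "commutator a b = a * b - b * a"

text \<open>An associative unital complex algebra is a unital ring 'a together with a
  unital ring homomorphism from the complex numbers into the centre of 'a
  (the scalars); scalar multiplication c.a is emb c * a.\<close>
definition complex_algebra_emb :: "(complex \<Rightarrow> 'a::ring_1) \<Rightarrow> bool" where
  "complex_algebra_emb emb \<longleftrightarrow>
     emb 1 = 1 \<and>
     (\<forall>c d. emb (c + d) = emb c + emb d) \<and>
     (\<forall>c d. emb (c * d) = emb c * emb d) \<and>
     (\<forall>c a. emb c * a = a * emb c)"

end

theory Submission imports Defs begin
lemma comm_mult_left: "commutator (a*b) (c::'a::ring) = a * commutator b c + commutator a c * b"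
  by (simp add: commutator_def algebra_simps)
lemma comm_add_left: "commutator (a+b) (c::'a::ring) = commutator a c + commutator b c"
  by (simp add: commutator_def algebra_simps)
lemma comm_diff_left: "commutator (a-b) (c::'a::ring) = commutator a c - commutator b c"
  by (simp add: commutator_def algebra_simps)
lemma comm_one_left: "commutator (1::'a::ring_1) c = 0"
  by (simp add: commutator_def)
lemma comm_num_left: "commutator (2::'a::ring_1) c = 0"
  by (simp add: commutator_def algebra_simps mult_2 mult_2_right)
lemma comm_self: "commutator (a::'a::ring) a = 0"
  by (simp add: commutator_def)

lemma core:
  fixes X1 X2 X3 X4 Y Z k m e :: "'a::ring_1"
  assumes km: "k*m = 1" and ck: "\<And>x. k*x = x*k" and cm: "\<And>x. m*x = x*m" and ce: "\<And>x. e*x = x*e"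
    and h1: "commutator X2 X1 = X2 + e * Z"
    and h2: "commutator X2 X4 = 0" and h3: "commutator X2 X3 = 0"
    and h6: "commutator X1 Z = - (e * m * Y)"
    and h7: "commutator X1 Y = Y"
    and h8: "commutator X2 Y = Z"
    and h9: "commutator X2 Z = m * X2"
    and h10: "commutator Z Y = m * Y"
    and h11: "commutator X3 Y = 0" and h12: "commutator X3 Z = 0"
    and h13: "commutator X4 Y = 0" and h14: "commutator X4 Z = 0"
  shows "commutator (2 * X2 * Y - Z * (k * Z + 1)) Y = 0"
    "commutator (2 * X2 * Y - Z * (k * Z + 1)) Z = 0"
    "commutator (2 * X2 * Y - Z * (k * Z + 1)) X1 = 0"
    "commutator (2 * X2 * Y - Z * (k * Z + 1)) X2 = 0"
    "commutator (2 * X2 * Y - Z * (k * Z + 1)) X3 = 0"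
    "commutator (2 * X2 * Y - Z * (k * Z + 1)) X4 = 0"
proof -
  have ak: "commutator k x = 0" for x using ck[of x] by (simp add: commutator_def)
  have anti: "commutator a b = - commutator b a" for a b :: 'a by (simp add: commutator_def)
  have kmx: "k*(m*x) = x" for x by (metis km mult.assoc mult_1)
  have mkx: "m*(k*x) = x" for x by (metis km ck mult.assoc mult_1)
  have mk: "m*k = 1" using km ck by metis
  have [simp]: "X1*(k*b) = k*(X1*b)" for b by (metis ck mult.assoc)
  have [simp]: "X1*k = k*X1" by (metis ck)
  have [simp]: "X2*(k*b) = k*(X2*b)" for b by (metis ck mult.assoc)
  have [simp]: "X2*k = k*X2" by (metis ck)
  have [simp]: "X3*(k*b) = k*(X3*b)" for b by (metis ck mult.assoc)
  have [simp]: "X3*k = k*X3" by (metis ck)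
  have [simp]: "X4*(k*b) = k*(X4*b)" for b by (metis ck mult.assoc)
  have [simp]: "X4*k = k*X4" by (metis ck)
  have [simp]: "Y*(k*b) = k*(Y*b)" for b by (metis ck mult.assoc)
  have [simp]: "Y*k = k*Y" by (metis ck)
  have [simp]: "Z*(k*b) = k*(Z*b)" for b by (metis ck mult.assoc)
  have [simp]: "Z*k = k*Z" by (metis ck)
  have [simp]: "X1*(m*b) = m*(X1*b)" for b by (metis cm mult.assoc)
  have [simp]: "X1*m = m*X1" by (metis cm)
  have [simp]: "X2*(m*b) = m*(X2*b)" for b by (metis cm mult.assoc)
  have [simp]: "X2*m = m*X2" by (metis cm)
  have [simp]: "X3*(m*b) = m*(X3*b)" for b by (metis cm mult.assoc)
  have [simp]: "X3*m = m*X3" by (metis cm)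
  have [simp]: "X4*(m*b) = m*(X4*b)" for b by (metis cm mult.assoc)
  have [simp]: "X4*m = m*X4" by (metis cm)
  have [simp]: "Y*(m*b) = m*(Y*b)" for b by (metis cm mult.assoc)
  have [simp]: "Y*m = m*Y" by (metis cm)
  have [simp]: "Z*(m*b) = m*(Z*b)" for b by (metis cm mult.assoc)
  have [simp]: "Z*m = m*Z" by (metis cm)
  have [simp]: "X1*(e*b) = e*(X1*b)" for b by (metis ce mult.assoc)
  have [simp]: "X1*e = e*X1" by (metis ce)
  have [simp]: "X2*(e*b) = e*(X2*b)" for b by (metis ce mult.assoc)
  have [simp]: "X2*e = e*X2" by (metis ce)
  have [simp]: "X3*(e*b) = e*(X3*b)" for b by (metis ce mult.assoc)
  have [simp]: "X3*e = e*X3" by (metis ce)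
  have [simp]: "X4*(e*b) = e*(X4*b)" for b by (metis ce mult.assoc)
  have [simp]: "X4*e = e*X4" by (metis ce)
  have [simp]: "Y*(e*b) = e*(Y*b)" for b by (metis ce mult.assoc)
  have [simp]: "Y*e = e*Y" by (metis ce)
  have [simp]: "Z*(e*b) = e*(Z*b)" for b by (metis ce mult.assoc)
  have [simp]: "Z*e = e*Z" by (metis ce)
  note E = comm_mult_left comm_add_left comm_diff_left comm_one_left comm_num_left comm_self ak
  have r1: "Y*X2 = X2*Y - Z" using h8 by (simp add: commutator_def algebra_simps)
  have r2: "Z*X2 = X2*Z - m*X2" using h9 by (simp add: commutator_def algebra_simps)
  have r3: "Y*Z = Z*Y - m*Y" using h10 by (simp add: commutator_def algebra_simps)
  have r4: "Y*X1 = X1*Y - Y" using h7 by (simp add: commutator_def algebra_simps)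
  have r5: "Z*X1 = X1*Z + e*(m*Y)" using h6 by (simp add: commutator_def algebra_simps)
  have r6: "X2*X1 = X1*X2 + X2 + e*Z" using h1 by (simp add: commutator_def algebra_simps)
  have r1b: "Y*(X2*b) = X2*(Y*b) - Z*b" for b using r1 by (metis mult.assoc left_diff_distrib)
  have r2b: "Z*(X2*b) = X2*(Z*b) - m*(X2*b)" for b using r2 by (metis mult.assoc left_diff_distrib)
  have r3b: "Y*(Z*b) = Z*(Y*b) - m*(Y*b)" for b using r3 by (metis mult.assoc left_diff_distrib)
  have r4b: "Y*(X1*b) = X1*(Y*b) - Y*b" for b using r4 by (metis mult.assoc left_diff_distrib)
  have r5b: "Z*(X1*b) = X1*(Z*b) + e*(m*(Y*b))" for b using r5 by (metis mult.assoc distrib_right)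
  have r6b: "X2*(X1*b) = X1*(X2*b) + X2*b + e*(Z*b)" for b using r6 by (metis mult.assoc distrib_right)
  have [simp]: "k*(e*x) = e*(k*x)" "m*(e*x) = e*(m*x)" for x by (metis ce mult.assoc)+
  note R = r1 r2 r3 r4 r5 r6 r1b r2b r3b r4b r5b r6b
  have hh: "commutator X3 X2 = 0" "commutator X4 X2 = 0" "commutator Y X3 = 0" "commutator Z X3 = 0" "commutator Y X4 = 0" "commutator Z X4 = 0"
       "commutator Y Z = - (m*Y)" "commutator Y X2 = -Z" "commutator Z X2 = -(m*X2)" "commutator Y X1 = -Y" "commutator Z X1 = e*(m*Y)"
    using h2 h3 h11 h12 h13 h14 h10 h8 h9 h7 h6 anti by (metis neg_equal_0_iff_equal mult.assoc minus_minus)+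
  note H = h1 h2 h3 h6 h7 h8 h9 h10 h11 h12 h13 h14 hh
  show "commutator (2 * X2 * Y - Z * (k * Z + 1)) Y = 0"
    by (simp add: E H mult.assoc; simp add: kmx mkx km mk mult_2 algebra_simps R)
  show "commutator (2 * X2 * Y - Z * (k * Z + 1)) Z = 0"
    by (simp add: E H mult.assoc; simp add: kmx mkx km mk mult_2 algebra_simps R)
  show "commutator (2 * X2 * Y - Z * (k * Z + 1)) X1 = 0"
    by (simp add: E H mult.assoc; simp add: kmx mkx km mk mult_2 algebra_simps R)
  show "commutator (2 * X2 * Y - Z * (k * Z + 1)) X2 = 0"
    by (simp add: E H mult.assoc; simp add: kmx mkx km mk mult_2 algebra_simps R)
  show "commutator (2 * X2 * Y - Z * (k * Z + 1)) X3 = 0"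
    by (simp add: E H mult.assoc; simp add: kmx mkx km mk mult_2 algebra_simps R)
  show "commutator (2 * X2 * Y - Z * (k * Z + 1)) X4 = 0"
    by (simp add: E H mult.assoc; simp add: kmx mkx km mk mult_2 algebra_simps R)
qed

lemma ceq:
  fixes X2 Y Z k :: "'a::ring_1"
  assumes ck: "\<And>x. k*x = x*k" and h8: "commutator X2 Y = Z"
  shows "(k+k)*((Y+X2)*(Y+X2)) - (k+k)*((Y-X2)*(Y-X2)) - ((k+k)*Z)*((k+k)*Z) = (k+k+k+k)*(2*X2*Y - Z*(k*Z+1))"
proof -
  have r1: "Y*X2 = X2*Y - Z" using h8 by (simp add: commutator_def algebra_simps)
  have [simp]: "Z*(k*b) = k*(Z*b)" "Z*k = k*Z" for b by (metis ck mult.assoc)+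
  show ?thesis by (simp add: algebra_simps r1 mult_2)
qed

lemma comm_central: "(\<And>x. k*x = x*k) \<Longrightarrow> commutator (k*a) b = k * commutator a (b::'a::ring)"
  unfolding commutator_def by (metis mult.assoc right_diff_distrib)

theorem proposition1:
  fixes \<gamma> \<epsilon> :: real
    and emb :: "complex \<Rightarrow> 'a::ring_1"
    and X1 X2 X3 X4 Y Z :: 'a
  assumes "\<gamma> \<noteq> 0" "\<gamma> \<noteq> 1" "\<gamma> \<noteq> 2" "\<gamma> \<noteq> -2"
    and alg: "complex_algebra_emb emb"
    and "commutator X2 X1 = X2 + emb (complex_of_real \<epsilon>) * Z"
    and "commutator X2 X4 = 0" and "commutator X2 X3 = 0" and "commutator X1 X4 = 0"
    and "commutator X1 X3 = - X3"
    and "commutator X3 X4 = X3"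
    and "commutator X1 Z = - (emb (complex_of_real (\<epsilon> * ((\<gamma> - 2) / (\<gamma> + 2)))) * Y)"
    and "commutator X1 Y = Y"
    and "commutator X2 Y = Z"
    and "commutator X2 Z = emb (complex_of_real ((\<gamma> - 2) / (\<gamma> + 2))) * X2"
    and "commutator Z Y = emb (complex_of_real ((\<gamma> - 2) / (\<gamma> + 2))) * Y"
    and "commutator X3 Y = 0" and "commutator X3 Z = 0"
    and "commutator X4 Y = 0" and "commutator X4 Z = 0"
  shows
    "let \<kappa> = complex_of_real ((\<gamma> + 2) / (\<gamma> - 2));
         T = emb (csqrt (2 * \<kappa>)) * (Y + X2);
         S = emb (csqrt (2 * \<kappa>)) * (Y - X2);
         Z' = emb (2 * \<kappa>) * Z;
         C = T * T - S * S - Z' * Z'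
     in C = emb (4 * \<kappa>) * (2 * X2 * Y - Z * (emb \<kappa> * Z + 1))
        \<and> commutator C Y = 0 \<and> commutator C Z = 0
        \<and> commutator C X1 = 0 \<and> commutator C X2 = 0
        \<and> commutator C X3 = 0 \<and> commutator C X4 = 0"
  proof -
  have e1: "emb 1 = 1" and eadd: "\<And>c d. emb (c + d) = emb c + emb d"
    and emul: "\<And>c d. emb (c * d) = emb c * emb d" and ec: "\<And>c a. emb c * a = a * emb c"
    using alg unfolding complex_algebra_emb_def by blast+
  define \<kappa> where "\<kappa> = complex_of_real ((\<gamma> + 2) / (\<gamma> - 2))"
  define \<mu> where "\<mu> = complex_of_real ((\<gamma> - 2) / (\<gamma> + 2))"
  have g1: "\<gamma> - 2 \<noteq> 0" "\<gamma> + 2 \<noteq> 0" using assms(3,4) by auto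
  have "\<kappa> * \<mu> = 1" unfolding \<kappa>_def \<mu>_def of_real_mult[symmetric] using g1 by simp
  then have km: "emb \<kappa> * emb \<mu> = 1" using emul[of \<kappa> \<mu>] e1 by simp
  have cs: "emb (csqrt (2*\<kappa>)) * emb (csqrt (2*\<kappa>)) = emb (2*\<kappa>)"
  proof -
    have "csqrt (2*\<kappa>) * csqrt (2*\<kappa>) = 2*\<kappa>" using power2_csqrt[of "2*\<kappa>"] unfolding power2_eq_square .
    then show ?thesis using emul[of "csqrt (2*\<kappa>)" "csqrt (2*\<kappa>)"] by simp
  qed
  have two: "emb (2*\<kappa>) = emb \<kappa> + emb \<kappa>" using eadd[of \<kappa> \<kappa>] by (simp only: mult_2)
  have four: "emb (4*\<kappa>) = emb \<kappa> + emb \<kappa> + emb \<kappa> + emb \<kappa>"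
  proof -
    have "4*\<kappa> = \<kappa> + \<kappa> + \<kappa> + \<kappa>" by (simp add: algebra_simps)
    then show ?thesis by (simp only: eadd)
  qed
  have mu: "complex_of_real (\<epsilon> * ((\<gamma> - 2) / (\<gamma> + 2))) = complex_of_real \<epsilon> * \<mu>"
    unfolding \<mu>_def by (rule of_real_mult)
  have h6: "commutator X1 Z = - (emb (complex_of_real \<epsilon>) * emb \<mu> * Y)"
    using assms(12) by (simp only: mu emul)
  note core6 = core[OF km ec ec ec assms(6,7,8) h6 assms(13,14) _ _ assms(17-20), folded \<mu>_def]
  note cc = core6[OF assms(15)[folded \<mu>_def] assms(16)[folded \<mu>_def]]
  define c where "c = csqrt (2*\<kappa>)"
  have tt: "emb c*(Y+X2)*(emb c*(Y+X2)) = emb(2*\<kappa>)*((Y+X2)*(Y+X2))"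
    by (metis cs c_def ec mult.assoc)
  have ss: "emb c*(Y-X2)*(emb c*(Y-X2)) = emb(2*\<kappa>)*((Y-X2)*(Y-X2))"
    by (metis cs c_def ec mult.assoc)
  have CC: "emb c*(Y+X2)*(emb c*(Y+X2)) - emb c*(Y-X2)*(emb c*(Y-X2)) - emb(2*\<kappa>)*Z*(emb(2*\<kappa>)*Z)
     = emb (4 * \<kappa>) * (2 * X2 * Y - Z * (emb \<kappa> * Z + 1))"
    unfolding tt ss four two by (rule ceq[OF ec assms(14)])
  have z: "commutator (emb (4 * \<kappa>) * (2 * X2 * Y - Z * (emb \<kappa> * Z + 1))) x = 0"
    if "commutator (2 * X2 * Y - Z * (emb \<kappa> * Z + 1)) x = 0" for x
    using that comm_central[of "emb (4 * \<kappa>)"] ec by simp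
  show ?thesis
    unfolding Let_def \<kappa>_def[symmetric] c_def[symmetric] CC
    using z cc by simp
qed
end
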